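(* The following sequence is exact: $$0\rightarrow H_1(S, \mathbb R)\xrightarrow{f_3} \mathcal K_\tau \xrightarrow{f_2} \widetilde{\mathcal T}_\lambda \xrightarrow{f_1} \mathbb R \rightarrow 0.$$
   Context: Let $S$ be an oriented surface of genus $g$ with $p\geq 1$ punctures and $m=2g-2+p>0$. Let $\tau$ be a decorated ideal triangulation of $S$: an ideal triangulation whose ideal triangles are numbered $\tau_1,\dots,\tau_{2m}$, each with a marked corner. The three sides of each $\tau_\mu$ are numbered $0,1,2$ in counterclockwise order, the $0$-side being opposite the marked corner. Let $\lambda$ be the underlying ideal triangulation (forget the marks), with edges $\lambda_1,\dots,\lambda_{3m}$ and dual edges $\lambda_1^*,\dots,\lambda_{3m}^*$ in the dual graph (whose vertices $\tau_\mu^*$ correspond to the triangles). $\mathcal K_\tau=\mathbb R^{4m}=\{(\ln y_1,\ln z_1,\dots,\ln y_{2m},\ln z_{2m})\}$ is the space of Kashaev coordinates. To such a vector assign to the sides of $\tau_\mu$ the numbers $\ln h_\mu^0=\ln y_\mu-\ln z_\mu$, $\ln h_\mu^1=\ln z_\mu$, $\ln h_\mu^2=-\ln y_\mu$; this identifies $\mathcal K_\tau$ with the subspace of $\mathbb R^{6m}=\{(\dots,\ln h_\mu^0,\ln h_\mu^1,\ln h_\mu^2,\dots)\}$ defined by $\ln h_\mu^0+\ln h_\mu^1+\ln h_\mu^2=0$ for every $\mu$. $\widetilde{\mathcal T}_\lambda=\mathbb R^{3m}=\{(\ln x_1,\dots,\ln x_{3m})\}$ is the enhanced Teichmüller space parametrized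 by shear coordinates, $\ln x_i$ being the shear coordinate at edge $\lambda_i$. The maps are: $f_1(\ln x_1,\dots,\ln x_{3m})=\sum_{i=1}^{3m}\ln x_i$; $f_2$ is the linear map given by $\ln x_i=\ln h_\mu^s+\ln h_\nu^t$ whenever $\lambda_i$ bounds the $s$-side of $\tau_\mu$ and the $t$-side of $\tau_\nu$ ($\mu$ may equal $\nu$); $f_3$ sends a homology class represented by $\sum_{i=1}^{3m}c_i\lambda_i^*$ (oriented dual edges) to the vector obtained by setting $\ln h_\mu^s=-c_i$ and $\ln h_\nu^t=c_i$ whenever $\lambda_i^*$ is oriented from the $s$-side of $\tau_\mu$ to the $t$-side of $\tau_\nu$ (this vector lies in $\mathcal K_\tau$ because the chain is a cycle). *)

theory Defs
  imports Complex_Main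
begin

text \<open>Combinatorial model of a decorated ideal triangulation tau of a punctured
  oriented surface with m = 2g-2+p.  Triangles are numbered 0..<2m, the sides of
  triangle mu are (mu,0),(mu,1),(mu,2) (0-side opposite the marked corner, counterclockwise).
  Edges are numbered 0..<3m; edge i bounds the side e1 i and the side e2 i.
  The dual edge of edge i is oriented from side e1 i to side e2 i.\<close>

type_synonym side = "nat \<times> nat"

text \<open>Vectors in R^n, as real functions on nat vanishing outside {..<n}.\<close>
definition vecs :: "nat \<Rightarrow> (nat \<Rightarrow> real) set" where
  "vecs n = {v. \<forall>i\<ge>n. v i = 0}"

definition sides :: "nat \<Rightarrow> side set" where
  "sides m = {..<2*m} \<times> {..<3}"

definition decorated_triangulation :: "nat \<Rightarrow> (nat \<Rightarrow> side) \<Rightarrow> (nat \<Rightarrow> side) \<Rightarrow> bool" where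
  "decorated_triangulation m e1 e2 \<longleftrightarrow>
     bij_betw (\<lambda>(i,k). if k = (0::nat) then e1 i else e2 i) ({..<3*m} \<times> {..<2}) (sides m)"

definition dual_adj :: "nat \<Rightarrow> (nat \<Rightarrow> side) \<Rightarrow> (nat \<Rightarrow> side) \<Rightarrow> (nat \<times> nat) set" where
  "dual_adj m e1 e2 = {(fst (e1 i), fst (e2 i)) | i. i < 3*m} \<union> {(fst (e2 i), fst (e1 i)) | i. i < 3*m}"

text \<open>The surface is connected, i.e. the dual graph is connected.\<close>
definition dual_connected :: "nat \<Rightarrow> (nat \<Rightarrow> side) \<Rightarrow> (nat \<Rightarrow> side) \<Rightarrow> bool" where
  "dual_connected m e1 e2 \<longleftrightarrow> (\<forall>\<rho> < 2*m. \<forall>\<rho>' < 2*m. (\<rho>, \<rho>') \<in> (dual_adj m e1 e2)\<^sup>*)"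

text \<open>Kashaev coordinates: K_tau = R^{4m}, pairs (ln y, ln z) of vectors in R^{2m}.\<close>
definition Kspace :: "nat \<Rightarrow> ((nat \<Rightarrow> real) \<times> (nat \<Rightarrow> real)) set" where
  "Kspace m = vecs (2*m) \<times> vecs (2*m)"

text \<open>The numbers ln h_mu^s assigned to the sides.\<close>
definition hcoord :: "(nat \<Rightarrow> real) \<times> (nat \<Rightarrow> real) \<Rightarrow> side \<Rightarrow> real" where
  "hcoord K = (\<lambda>(\<mu>, s). if s = 0 then fst K \<mu> - snd K \<mu>
                        else if s = 1 then snd K \<mu> else - fst K \<mu>)"

text \<open>Enhanced Teichmueller space in shear coordinates: R^{3m}.\<close>
definition Tspace :: "nat \<Rightarrow> (nat \<Rightarrow> real) set" where
  "Tspace m = vecs (3*m)"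

definition f1 :: "nat \<Rightarrow> (nat \<Rightarrow> real) \<Rightarrow> real" where
  "f1 m x = (\<Sum>i<3*m. x i)"

definition f2 :: "nat \<Rightarrow> (nat \<Rightarrow> side) \<Rightarrow> (nat \<Rightarrow> side) \<Rightarrow>
    (nat \<Rightarrow> real) \<times> (nat \<Rightarrow> real) \<Rightarrow> nat \<Rightarrow> real" where
  "f2 m e1 e2 K = (\<lambda>i. if i < 3*m then hcoord K (e1 i) + hcoord K (e2 i) else 0)"

text \<open>H_1(S,R): S deformation retracts onto the dual graph (which has no 2-cells),
  so H_1(S,R) is the space of real 1-cycles sum c_i lambda_i^* of the dual graph.\<close>
definition H1 :: "nat \<Rightarrow> (nat \<Rightarrow> side) \<Rightarrow> (nat \<Rightarrow> side) \<Rightarrow> (nat \<Rightarrow> real) set" where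
  "H1 m e1 e2 = {c \<in> vecs (3*m). \<forall>\<rho> < 2*m.
      (\<Sum>i<3*m. (if fst (e2 i) = \<rho> then c i else 0) - (if fst (e1 i) = \<rho> then c i else 0)) = 0}"

text \<open>The vector ln h assigned by f_3: -c_i on the source side, c_i on the target side.\<close>
definition h3 :: "nat \<Rightarrow> (nat \<Rightarrow> side) \<Rightarrow> (nat \<Rightarrow> side) \<Rightarrow> (nat \<Rightarrow> real) \<Rightarrow> side \<Rightarrow> real" where
  "h3 m e1 e2 c \<sigma> = (\<Sum>i<3*m. (if e1 i = \<sigma> then - c i else 0) + (if e2 i = \<sigma> then c i else 0))"

definition f3 :: "nat \<Rightarrow> (nat \<Rightarrow> side) \<Rightarrow> (nat \<Rightarrow> side) \<Rightarrow> (nat \<Rightarrow> real) \<Rightarrow>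
    (nat \<Rightarrow> real) \<times> (nat \<Rightarrow> real)" where
  "f3 m e1 e2 c = ((\<lambda>\<mu>. if \<mu> < 2*m then - h3 m e1 e2 c (\<mu>, 2) else 0),
                   (\<lambda>\<mu>. if \<mu> < 2*m then h3 m e1 e2 c (\<mu>, 1) else 0))"

end

theory Submission
  imports Defs
begin

lemma sum3: "(\<Sum>s<(3::nat). f s) = f 0 + f 1 + (f 2 :: real)"
  by (simp add: numeral_3_eq_3 numeral_2_eq_2 lessThan_Suc)

lemma delta3: "q < 3 \<Longrightarrow> (\<Sum>s<(3::nat). if (p,q) = (rho,s) then (x::real) else 0) = (if p = rho then x else 0)"
  by (cases "p = rho") auto

definition dv :: "nat \<Rightarrow> (nat\<Rightarrow>side) \<Rightarrow> (nat\<Rightarrow>side) \<Rightarrow> (nat\<Rightarrow>real) \<Rightarrow> nat \<Rightarrow> real" where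
 "dv m e1 e2 t rho = (\<Sum>i<3*m. (if fst (e1 i) = rho then t i else 0) - (if fst (e2 i) = rho then t i else 0))"

lemma dv_lin: "dv m e1 e2 (\<lambda>j. t j + c * u j) r = dv m e1 e2 t r + c * dv m e1 e2 u r"
  unfolding dv_def sum_distrib_left sum.distrib[symmetric] by (rule sum.cong) (auto simp: algebra_simps)

lemma dv_zero: "dv m e1 e2 (\<lambda>j. 0) r = 0"
  by (simp add: dv_def)

lemma dv_sum: "dv m e1 e2 (\<lambda>j. \<Sum>\<rho><(n::nat). d \<rho> * P \<rho> j) r = (\<Sum>\<rho><n. d \<rho> * dv m e1 e2 (P \<rho>) r)"
proof (induction n)
  case 0 then show ?case by (simp add: dv_zero)
next
  case (Suc n)
  have "dv m e1 e2 (\<lambda>j. \<Sum>\<rho><Suc n. d \<rho> * P \<rho> j) r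
      = dv m e1 e2 (\<lambda>j. (\<Sum>\<rho><n. d \<rho> * P \<rho> j) + d n * P n j) r" by simp
  also have "\<dots> = dv m e1 e2 (\<lambda>j. \<Sum>\<rho><n. d \<rho> * P \<rho> j) r + d n * dv m e1 e2 (P n) r"
    by (rule dv_lin)
  finally show ?case using Suc by simp
qed

lemma path_flow:
  assumes "(a,b) \<in> (dual_adj m e1 e2)\<^sup>*"
  shows "\<exists>t. \<forall>r. dv m e1 e2 t r = (if r = a then 1 else 0) - (if r = b then 1 else 0)"
  using assms
proof (induct rule: converse_rtrancl_induct)
  case base show ?case by (rule exI[of _ "\<lambda>_. 0"]) (simp add: dv_def)
next
  case (step y z)
  from step(3) obtain t where t: "\<forall>r. dv m e1 e2 t r = (if r = z then 1 else 0) - (if r = b then 1 else 0)" by blast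
  from step(1) obtain i where i: "i<3*m" and yz: "(y = fst (e1 i) \<and> z = fst (e2 i)) \<or> (y = fst (e2 i) \<and> z = fst (e1 i))"
    unfolding dual_adj_def by auto
  define u where "u = (\<lambda>j. if j = i then (1::real) else 0)"
  have du: "dv m e1 e2 u r = (if fst (e1 i) = r then 1 else 0) - (if fst (e2 i) = r then 1 else 0)" for r
  proof -
    have "dv m e1 e2 u r = (\<Sum>j<3*m. if j = i then (if fst (e1 i) = r then 1 else 0) - (if fst (e2 i) = r then 1 else 0) else 0)"
      unfolding dv_def u_def by (rule sum.cong) auto
    also have "\<dots> = (if fst (e1 i) = r then 1 else 0) - (if fst (e2 i) = r then 1 else 0)" using i by simp
    finally show ?thesis .
  qed
  from yz show ?case
  proof
    assume h: "y = fst (e1 i) \<and> z = fst (e2 i)"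
    show ?case
    proof (intro exI allI)
      fix r
      have e: "dv m e1 e2 (\<lambda>j. t j + 1 * u j) r = dv m e1 e2 t r + 1 * dv m e1 e2 u r" by (rule dv_lin)
      show "dv m e1 e2 (\<lambda>j. t j + 1 * u j) r = (if r = y then 1 else 0) - (if r = b then 1 else 0)"
        unfolding e using h t du[of r] by auto
    qed
  next
    assume h: "y = fst (e2 i) \<and> z = fst (e1 i)"
    show ?case
    proof (intro exI allI)
      fix r
      have e: "dv m e1 e2 (\<lambda>j. t j + (-1) * u j) r = dv m e1 e2 t r + (-1) * dv m e1 e2 u r" by (rule dv_lin)
      show "dv m e1 e2 (\<lambda>j. t j + (-1) * u j) r = (if r = y then 1 else 0) - (if r = b then 1 else 0)"
        unfolding e using h t du[of r] by auto
    qed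
  qed
qed

lemma flow:
  assumes m: "m > 0" and conn: "dual_connected m e1 e2" and d: "(\<Sum>\<rho><2*m. d \<rho>) = 0"
  shows "\<exists>t. \<forall>r<2*m. dv m e1 e2 t r = d r"
proof -
  have ex: "\<forall>\<rho>\<in>{..<2*m}. \<exists>t. \<forall>r. dv m e1 e2 t r = (if r = \<rho> then 1 else 0) - (if r = 0 then 1 else 0)"
    using path_flow conn m unfolding dual_connected_def by auto
  from bchoice[OF ex] obtain P where P: "\<forall>\<rho>\<in>{..<2*m}. \<forall>r. dv m e1 e2 (P \<rho>) r = (if r = \<rho> then 1 else 0) - (if r = 0 then 1 else 0)"
    by blast
  show ?thesis
  proof (intro exI allI impI)
    fix r assume r: "r < 2*m"
    have "dv m e1 e2 (\<lambda>j. \<Sum>\<rho><2*m. d \<rho> * P \<rho> j) r = (\<Sum>\<rho><2*m. d \<rho> * dv m e1 e2 (P \<rho>) r)"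
      by (rule dv_sum)
    also have "\<dots> = (\<Sum>\<rho><2*m. (if r = \<rho> then d \<rho> else 0) - d \<rho> * (if r = 0 then 1 else 0))"
    proof (rule sum.cong[OF refl])
      fix \<rho> assume "\<rho> \<in> {..<2*m}"
      with P have h: "dv m e1 e2 (P \<rho>) r = (if r = \<rho> then 1 else 0) - (if r = 0 then 1 else 0)" by blast
      then show "d \<rho> * dv m e1 e2 (P \<rho>) r = (if r = \<rho> then d \<rho> else 0) - d \<rho> * (if r = 0 then 1 else 0)"
        by (simp only: h) (simp add: algebra_simps)
    qed
    also have "\<dots> = d r - (\<Sum>\<rho><2*m. d \<rho>) * (if r = 0 then 1 else 0)"
      using r by (simp add: sum_subtractf sum_distrib_right)
    also have "\<dots> = d r" using d by simp
    finally show "dv m e1 e2 (\<lambda>j. \<Sum>\<rho><2*m. d \<rho> * P \<rho> j) r = d r" .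
  qed
qed

context
  fixes m :: nat and e1 e2 :: "nat \<Rightarrow> side"
  assumes dt: "decorated_triangulation m e1 e2"
begin

lemma bij: "bij_betw (\<lambda>(i,k). if k = (0::nat) then e1 i else e2 i) ({..<3*m} \<times> {..<2}) (sides m)"
  using dt unfolding decorated_triangulation_def by simp

lemma e1_in: "i < 3*m \<Longrightarrow> e1 i \<in> sides m"
  using bij_betw_apply[OF bij, of "(i,0)"] by simp

lemma e2_in: "i < 3*m \<Longrightarrow> e2 i \<in> sides m"
  using bij_betw_apply[OF bij, of "(i,1)"] by simp

lemma e1_inj: "i < 3*m \<Longrightarrow> j < 3*m \<Longrightarrow> e1 i = e1 j \<Longrightarrow> i = j"
  using inj_onD[OF bij_betw_imp_inj_on[OF bij], of "(i,0)" "(j,0)"] by auto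

lemma e2_inj: "i < 3*m \<Longrightarrow> j < 3*m \<Longrightarrow> e2 i = e2 j \<Longrightarrow> i = j"
  using inj_onD[OF bij_betw_imp_inj_on[OF bij], of "(i,1)" "(j,1)"] by auto

lemma e12: "i < 3*m \<Longrightarrow> j < 3*m \<Longrightarrow> e1 i \<noteq> e2 j"
  using inj_onD[OF bij_betw_imp_inj_on[OF bij], of "(i,0)" "(j,1)"] by auto

lemma surj: "\<sigma> \<in> sides m \<Longrightarrow> \<exists>i<3*m. \<sigma> = e1 i \<or> \<sigma> = e2 i"
proof -
  assume "\<sigma> \<in> sides m"
  then have "\<sigma> \<in> (\<lambda>(i,k). if k = (0::nat) then e1 i else e2 i) ` ({..<3*m} \<times> {..<2})"
    using bij_betw_imp_surj_on[OF bij] by simp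
  then show ?thesis by (auto split: if_splits)
qed

lemma pick1: "j < 3*m \<Longrightarrow> (\<Sum>i<3*m. (if e1 i = e1 j then a i else 0) + (if e2 i = e1 j then b i else 0)) = (a j :: real)"
proof -
  assume j: "j < 3*m"
  have "(\<Sum>i<3*m. (if e1 i = e1 j then a i else 0) + (if e2 i = e1 j then b i else 0)) = (\<Sum>i<3*m. if i = j then a j else 0)"
  proof (rule sum.cong[OF refl])
    fix i assume "i \<in> {..<3*m}"
    then have i: "i < 3*m" by simp
    show "(if e1 i = e1 j then a i else 0) + (if e2 i = e1 j then b i else 0) = (if i = j then a j else 0)"
      using e1_inj[OF i j] e12[OF j i] by auto
  qed
  then show ?thesis using j by simp
qed

lemma pick2: "j < 3*m \<Longrightarrow> (\<Sum>i<3*m. (if e1 i = e2 j then a i else 0) + (if e2 i = e2 j then b i else 0)) = (b j :: real)"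
proof -
  assume j: "j < 3*m"
  have "(\<Sum>i<3*m. (if e1 i = e2 j then a i else 0) + (if e2 i = e2 j then b i else 0)) = (\<Sum>i<3*m. if i = j then b j else 0)"
  proof (rule sum.cong[OF refl])
    fix i assume "i \<in> {..<3*m}"
    then have i: "i < 3*m" by simp
    show "(if e1 i = e2 j then a i else 0) + (if e2 i = e2 j then b i else 0) = (if i = j then b j else 0)"
      using e2_inj[OF i j] e12[OF i j] by auto
  qed
  then show ?thesis using j by simp
qed

lemma repr: "\<sigma> \<in> sides m \<Longrightarrow> (h::side\<Rightarrow>real) \<sigma> = (\<Sum>i<3*m. (if e1 i = \<sigma> then h (e1 i) else 0) + (if e2 i = \<sigma> then h (e2 i) else 0))"
  using surj[of \<sigma>] pick1[of _ "\<lambda>i. h (e1 i)" "\<lambda>i. h (e2 i)"] pick2[of _ "\<lambda>i. h (e1 i)" "\<lambda>i. h (e2 i)"]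
  by auto

lemma swap: "(\<Sum>s<3. \<Sum>i<3*m. (if e1 i = (rho,s) then a i else 0) + (if e2 i = (rho,s) then b i else 0))
   = (\<Sum>i<3*m. (if fst (e1 i) = rho then a i else 0) + (if fst (e2 i) = rho then (b i::real) else 0))"
proof -
  have "(\<Sum>s<3. \<Sum>i<3*m. (if e1 i = (rho,s) then a i else 0) + (if e2 i = (rho,s) then b i else 0))
     = (\<Sum>i<3*m. \<Sum>s<3. (if e1 i = (rho,s) then a i else 0) + (if e2 i = (rho,s) then b i else 0))"
    by (rule sum.swap)
  also have "\<dots> = (\<Sum>i<3*m. (if fst (e1 i) = rho then a i else 0) + (if fst (e2 i) = rho then (b i::real) else 0))"
  proof (rule sum.cong[OF refl])
    fix i assume "i \<in> {..<3*m}"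
    then have i: "i < 3*m" by simp
    obtain p q where pq: "e1 i = (p,q)" by fastforce
    obtain p' q' where pq': "e2 i = (p',q')" by fastforce
    have q: "q < 3" using e1_in[OF i] pq by (simp add: sides_def)
    have q': "q' < 3" using e2_in[OF i] pq' by (simp add: sides_def)
    show "(\<Sum>s<3. (if e1 i = (rho,s) then a i else 0) + (if e2 i = (rho,s) then b i else 0))
       = (if fst (e1 i) = rho then a i else 0) + (if fst (e2 i) = rho then (b i::real) else 0)"
      unfolding sum.distrib pq pq' using delta3[OF q, of p rho "a i"] delta3[OF q', of p' rho "b i"] by simp
  qed
  finally show ?thesis .
qed

lemma sum_all: "(\<Sum>\<rho><2*m. \<Sum>s<3. \<Sum>i<3*m. (if e1 i = (\<rho>,s) then a i else 0) + (if e2 i = (\<rho>,s) then b i else 0))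
   = (\<Sum>i<3*m. a i + (b i::real))"
proof -
  have "(\<Sum>\<rho><2*m. \<Sum>s<3. \<Sum>i<3*m. (if e1 i = (\<rho>,s) then a i else 0) + (if e2 i = (\<rho>,s) then b i else 0))
     = (\<Sum>\<rho><2*m. \<Sum>i<3*m. (if fst (e1 i) = \<rho> then a i else 0) + (if fst (e2 i) = \<rho> then (b i::real) else 0))"
    using swap by simp
  also have "\<dots> = (\<Sum>i<3*m. \<Sum>\<rho><2*m. (if fst (e1 i) = \<rho> then a i else 0) + (if fst (e2 i) = \<rho> then (b i::real) else 0))"
    by (rule sum.swap)
  also have "\<dots> = (\<Sum>i<3*m. a i + (b i::real))"
  proof (rule sum.cong[OF refl])
    fix i assume "i \<in> {..<3*m}"
    then have i: "i < 3*m" by simp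
    have "fst (e1 i) < 2*m" "fst (e2 i) < 2*m" using e1_in[OF i] e2_in[OF i] by (auto simp: sides_def)
    then show "(\<Sum>\<rho><2*m. (if fst (e1 i) = \<rho> then a i else 0) + (if fst (e2 i) = \<rho> then (b i::real) else 0)) = a i + b i"
      by (simp add: sum.distrib)
  qed
  finally show ?thesis .
qed

lemma cyc_h3: "(\<Sum>i<3*m. (if fst (e2 i) = \<rho> then c i else 0) - (if fst (e1 i) = \<rho> then c i else 0))
   = (\<Sum>s<3. h3 m e1 e2 c (\<rho>,s))"
  unfolding h3_def swap by (rule sum.cong) auto

lemma tri_h3: "c \<in> H1 m e1 e2 \<Longrightarrow> \<rho> < 2*m \<Longrightarrow> h3 m e1 e2 c (\<rho>,0) + h3 m e1 e2 c (\<rho>,1) + h3 m e1 e2 c (\<rho>,2) = 0"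
  using cyc_h3[of \<rho> c] unfolding H1_def sum3 by auto

lemma h3_e1: "j < 3*m \<Longrightarrow> h3 m e1 e2 c (e1 j) = - c j"
  unfolding h3_def by (rule pick1)

lemma h3_e2: "j < 3*m \<Longrightarrow> h3 m e1 e2 c (e2 j) = c j"
  unfolding h3_def by (rule pick2)

lemma hc3: "c \<in> H1 m e1 e2 \<Longrightarrow> \<sigma> \<in> sides m \<Longrightarrow> hcoord (f3 m e1 e2 c) \<sigma> = h3 m e1 e2 c \<sigma>"
proof -
  assume c: "c \<in> H1 m e1 e2" and s: "\<sigma> \<in> sides m"
  obtain \<mu> k where sk: "\<sigma> = (\<mu>,k)" "\<mu> < 2*m" "k < 3" using s by (auto simp: sides_def)
  have "k = 0 \<or> k = 1 \<or> k = 2" using sk by arith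
  then show ?thesis using tri_h3[OF c sk(2)] sk by (auto simp: hcoord_def f3_def)
qed

end

lemma h3_zero: "h3 m e1 e2 (\<lambda>_. 0) \<sigma> = 0"
  unfolding h3_def by (intro sum.neutral ballI) simp

lemma partA:
  assumes dt: "decorated_triangulation m e1 e2"
  shows "{c \<in> H1 m e1 e2. f3 m e1 e2 c = ((\<lambda>_. 0), (\<lambda>_. 0))} = {\<lambda>_. 0}"
proof
  show "{\<lambda>_. 0} \<subseteq> {c \<in> H1 m e1 e2. f3 m e1 e2 c = ((\<lambda>_. 0), (\<lambda>_. 0))}"
    by (auto simp: H1_def vecs_def f3_def h3_zero)
  show "{c \<in> H1 m e1 e2. f3 m e1 e2 c = ((\<lambda>_. 0), (\<lambda>_. 0))} \<subseteq> {\<lambda>_. 0}"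
  proof
    fix c assume "c \<in> {c \<in> H1 m e1 e2. f3 m e1 e2 c = ((\<lambda>_. 0), (\<lambda>_. 0))}"
    then have c: "c \<in> H1 m e1 e2" and f: "f3 m e1 e2 c = ((\<lambda>_. 0), (\<lambda>_. 0))" by auto
    have z: "h3 m e1 e2 c (\<rho>,s) = 0" if "\<rho> < 2*m" "s < 3" for \<rho> s
    proof -
      have 2: "h3 m e1 e2 c (\<rho>,2) = 0" using fun_cong[OF arg_cong[OF f, of fst], of \<rho>] that by (simp add: f3_def)
      have 1: "h3 m e1 e2 c (\<rho>,1) = 0" using fun_cong[OF arg_cong[OF f, of snd], of \<rho>] that by (simp add: f3_def)
      have 0: "h3 m e1 e2 c (\<rho>,0) = 0" using tri_h3[OF dt c that(1)] 1 2 by simp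
      have "s = 0 \<or> s = 1 \<or> s = 2" using that by arith
      then show ?thesis using 0 1 2 by auto
    qed
    have "c j = 0" for j
    proof (cases "j < 3*m")
      case True
      obtain \<rho> s where "e1 j = (\<rho>,s)" "\<rho> < 2*m" "s < 3" using e1_in[OF dt True] by (auto simp: sides_def)
      then have "h3 m e1 e2 c (e1 j) = 0" using z by simp
      then show ?thesis using h3_e1[OF dt True, of c] by simp
    next
      case False
      then show ?thesis using c by (auto simp: H1_def vecs_def)
    qed
    then show "c \<in> {\<lambda>_. 0}" by auto
  qed
qed

lemma partC1:
  assumes dt: "decorated_triangulation m e1 e2" and c: "c \<in> H1 m e1 e2"
  shows "f2 m e1 e2 (f3 m e1 e2 c) = (\<lambda>_. 0)"
proof
  fix i show "f2 m e1 e2 (f3 m e1 e2 c) i = 0"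
  proof (cases "i < 3*m")
    case True
    then show ?thesis unfolding f2_def
      using hc3[OF dt c e1_in[OF dt True]] hc3[OF dt c e2_in[OF dt True]] h3_e1[OF dt True] h3_e2[OF dt True]
      by simp
  qed (simp add: f2_def)
qed

lemma partC2:
  assumes dt: "decorated_triangulation m e1 e2" and K: "K \<in> Kspace m" and f: "f2 m e1 e2 K = (\<lambda>_. 0)"
  shows "K \<in> f3 m e1 e2 ` H1 m e1 e2"
proof -
  define c where "c = (\<lambda>i. if i < 3*m then hcoord K (e2 i) else 0)"
  have hK: "hcoord K (e1 j) = - hcoord K (e2 j)" if "j < 3*m" for j
    using fun_cong[OF f, of j] that by (simp add: f2_def)
  have hh: "h3 m e1 e2 c \<sigma> = hcoord K \<sigma>" if sg: "\<sigma> \<in> sides m" for \<sigma>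
  proof -
    obtain j where j: "j < 3*m" "\<sigma> = e1 j \<or> \<sigma> = e2 j" using surj[OF dt sg] by blast
    then show ?thesis using h3_e1[OF dt j(1), of c] h3_e2[OF dt j(1), of c] hK[OF j(1)] by (auto simp: c_def)
  qed
  have cH: "c \<in> H1 m e1 e2"
  proof -
    have "(\<Sum>i<3*m. (if fst (e2 i) = \<rho> then c i else 0) - (if fst (e1 i) = \<rho> then c i else 0)) = 0"
      if r: "\<rho> < 2*m" for \<rho>
    proof -
      have "(\<Sum>i<3*m. (if fst (e2 i) = \<rho> then c i else 0) - (if fst (e1 i) = \<rho> then c i else 0))
          = (\<Sum>s<3. h3 m e1 e2 c (\<rho>,s))" by (rule cyc_h3[OF dt])
      also have "\<dots> = (\<Sum>s<3. hcoord K (\<rho>,s))"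
        using hh r by (intro sum.cong) (auto simp: sides_def)
      also have "\<dots> = 0" by (simp add: sum3 hcoord_def)
      finally show ?thesis .
    qed
    moreover have "c \<in> vecs (3*m)" by (simp add: c_def vecs_def)
    ultimately show ?thesis unfolding H1_def by blast
  qed
  have "f3 m e1 e2 c = K"
  proof (rule prod_eqI)
    show "fst (f3 m e1 e2 c) = fst K"
    proof
      fix \<mu> show "fst (f3 m e1 e2 c) \<mu> = fst K \<mu>"
      proof (cases "\<mu> < 2*m")
        case True then show ?thesis using hh[of "(\<mu>,2)"] by (simp add: f3_def sides_def hcoord_def)
      next
        case False then show ?thesis using K by (cases K) (auto simp: f3_def Kspace_def vecs_def)
      qed
    qed
    show "snd (f3 m e1 e2 c) = snd K"
    proof
      fix \<mu> show "snd (f3 m e1 e2 c) \<mu> = snd K \<mu>"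
      proof (cases "\<mu> < 2*m")
        case True then show ?thesis using hh[of "(\<mu>,1)"] by (simp add: f3_def sides_def hcoord_def)
      next
        case False then show ?thesis using K by (cases K) (auto simp: f3_def Kspace_def vecs_def)
      qed
    qed
  qed
  then show ?thesis using cH by blast
qed

lemma partE1:
  assumes dt: "decorated_triangulation m e1 e2" and K: "K \<in> Kspace m"
  shows "f1 m (f2 m e1 e2 K) = 0"
proof -
  let ?h = "hcoord K"
  have "0 = (\<Sum>\<rho><2*m. \<Sum>s<3. ?h (\<rho>,s))" by (simp add: sum3 hcoord_def)
  also have "\<dots> = (\<Sum>\<rho><2*m. \<Sum>s<3. \<Sum>i<3*m. (if e1 i = (\<rho>,s) then ?h (e1 i) else 0) + (if e2 i = (\<rho>,s) then ?h (e2 i) else 0))"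
    using repr[OF dt, of _ ?h] by (intro sum.cong refl) (auto simp: sides_def)
  also have "\<dots> = (\<Sum>i<3*m. ?h (e1 i) + ?h (e2 i))" by (rule sum_all[OF dt])
  also have "\<dots> = f1 m (f2 m e1 e2 K)" by (simp add: f1_def f2_def)
  finally show ?thesis by simp
qed

lemma partE2:
  assumes m: "m > 0" and dt: "decorated_triangulation m e1 e2" and conn: "dual_connected m e1 e2"
    and x: "x \<in> Tspace m" and f: "f1 m x = 0"
  shows "x \<in> f2 m e1 e2 ` Kspace m"
proof -
  define w where "w = (\<lambda>\<rho>. \<Sum>i<3*m. if fst (e2 i) = \<rho> then x i else 0)"
  have "(\<Sum>\<rho><2*m. w \<rho>) = (\<Sum>i<3*m. \<Sum>\<rho><2*m. if fst (e2 i) = \<rho> then x i else 0)"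
    unfolding w_def by (rule sum.swap)
  also have "\<dots> = (\<Sum>i<3*m. x i)"
  proof (rule sum.cong[OF refl])
    fix i assume "i \<in> {..<3*m}"
    then have "fst (e2 i) < 2*m" using e2_in[OF dt, of i] by (auto simp: sides_def)
    then show "(\<Sum>\<rho><2*m. if fst (e2 i) = \<rho> then x i else 0) = x i" by simp
  qed
  also have "\<dots> = 0" using f by (simp add: f1_def)
  finally have ws: "(\<Sum>\<rho><2*m. - w \<rho>) = 0" by (simp add: sum_negf)
  obtain t where t: "\<forall>r<2*m. dv m e1 e2 t r = - w r" using flow[OF m conn ws] by blast
  define h where "h = (\<lambda>\<sigma>. \<Sum>i<3*m. (if e1 i = \<sigma> then t i else 0) + (if e2 i = \<sigma> then x i - t i else 0))"
  have tri: "h (\<rho>,0) + h (\<rho>,1) + h (\<rho>,2) = 0" if r: "\<rho> < 2*m" for \<rho>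
  proof -
    have "h (\<rho>,0) + h (\<rho>,1) + h (\<rho>,2) = (\<Sum>s<3. h (\<rho>,s))" by (simp add: sum3)
    also have "\<dots> = (\<Sum>i<3*m. (if fst (e1 i) = \<rho> then t i else 0) + (if fst (e2 i) = \<rho> then x i - t i else 0))"
      unfolding h_def by (rule swap[OF dt])
    also have "\<dots> = dv m e1 e2 t \<rho> + w \<rho>"
      unfolding dv_def w_def sum.distrib[symmetric] by (rule sum.cong) auto
    also have "\<dots> = 0" using t r by simp
    finally show ?thesis .
  qed
  define K where "K = ((\<lambda>\<mu>. if \<mu> < 2*m then - h (\<mu>,2) else 0), (\<lambda>\<mu>. if \<mu> < 2*m then h (\<mu>,1) else 0))"
  have KK: "K \<in> Kspace m" by (simp add: K_def Kspace_def vecs_def)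
  have hK: "hcoord K \<sigma> = h \<sigma>" if sg: "\<sigma> \<in> sides m" for \<sigma>
  proof -
    obtain \<mu> k where sk: "\<sigma> = (\<mu>,k)" "\<mu> < 2*m" "k < 3" using sg by (auto simp: sides_def)
    have "k = 0 \<or> k = 1 \<or> k = 2" using sk by arith
    then show ?thesis using tri[OF sk(2)] sk by (auto simp: hcoord_def K_def)
  qed
  have "f2 m e1 e2 K = x"
  proof
    fix i show "f2 m e1 e2 K i = x i"
    proof (cases "i < 3*m")
      case True
      have "h (e1 i) = t i" unfolding h_def by (rule pick1[OF dt True])
      moreover have "h (e2 i) = x i - t i" unfolding h_def by (rule pick2[OF dt True])
      ultimately show ?thesis using True hK[OF e1_in[OF dt True]] hK[OF e2_in[OF dt True]] by (simp add: f2_def)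
    next
      case False then show ?thesis using x by (simp add: f2_def Tspace_def vecs_def)
    qed
  qed
  then show ?thesis using KK by blast
qed

theorem theorem4p1:
  fixes m :: nat and e1 e2 :: "nat \<Rightarrow> side"
  assumes "m > 0"
    and "decorated_triangulation m e1 e2"
    and "dual_connected m e1 e2"
  shows "{c \<in> H1 m e1 e2. f3 m e1 e2 c = ((\<lambda>_. 0), (\<lambda>_. 0))} = {\<lambda>_. 0}
       \<and> f3 m e1 e2 ` H1 m e1 e2 \<subseteq> Kspace m
       \<and> f3 m e1 e2 ` H1 m e1 e2 = {K \<in> Kspace m. f2 m e1 e2 K = (\<lambda>_. 0)}
       \<and> f2 m e1 e2 ` Kspace m \<subseteq> Tspace m
       \<and> f2 m e1 e2 ` Kspace m = {x \<in> Tspace m. f1 m x = 0}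
       \<and> f1 m ` Tspace m = UNIV"
proof (intro conjI)
  show "{c \<in> H1 m e1 e2. f3 m e1 e2 c = ((\<lambda>_. 0), (\<lambda>_. 0))} = {\<lambda>_. 0}" by (rule partA[OF assms(2)])
  show B: "f3 m e1 e2 ` H1 m e1 e2 \<subseteq> Kspace m" by (auto simp: f3_def Kspace_def vecs_def)
  show "f3 m e1 e2 ` H1 m e1 e2 = {K \<in> Kspace m. f2 m e1 e2 K = (\<lambda>_. 0)}"
    using B partC1[OF assms(2)] partC2[OF assms(2)] by blast
  show D: "f2 m e1 e2 ` Kspace m \<subseteq> Tspace m" by (auto simp: f2_def Tspace_def vecs_def)
  show "f2 m e1 e2 ` Kspace m = {x \<in> Tspace m. f1 m x = 0}"
    using D partE1[OF assms(2)] partE2[OF assms(1,2,3)] by blast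
  show "f1 m ` Tspace m = UNIV"
  proof (intro set_eqI iffI)
    fix r :: real
    have "(\<lambda>i. if i = 0 then r else 0) \<in> Tspace m" using assms(1) by (simp add: Tspace_def vecs_def)
    moreover have "f1 m (\<lambda>i. if i = 0 then r else 0) = r" using assms(1) by (simp add: f1_def)
    ultimately show "r \<in> f1 m ` Tspace m" by (metis image_eqI)
  qed simp
qed

end
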